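(* Let $G$ be a connected graph with vertex set $\{u_1,\dots,u_t\}$, $t\ge2$, and let $\mathcal{H}=\{C_{n_1},\dots,C_{n_t}\}$ be a family of cycles with $n_i\ge7$ for all $i$. Then $\dim_l(G\circ\mathcal{H})=\sum_{i=1}^t\lceil n_i/4\rceil$.
   Context: All graphs are finite and simple. For a connected graph $G$, $\dim_l(G)$ is the minimum size of $S\subseteq V(G)$ such that for every two adjacent vertices $x,y$ some $s\in S$ has $d_G(s,x)\ne d_G(s,y)$ ($d_G$ shortest-path distance). Lexicographic product $G\circ\mathcal{H}$ with $H_i=C_{n_i}$: vertex set $\bigcup_i\{u_i\}\times V(H_i)$, $(u_i,v)\sim(u_j,w)$ iff $u_iu_j\in E(G)$, or $i=j$ and $vw\in E(H_i)$. *)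

theory Defs
  imports Complex_Main
begin

fun reach :: "'a set \<Rightarrow> ('a \<Rightarrow> 'a \<Rightarrow> bool) \<Rightarrow> nat \<Rightarrow> 'a \<Rightarrow> 'a \<Rightarrow> bool" where
  "reach V adj 0 x y = (x = y \<and> x \<in> V)"
| "reach V adj (Suc k) x y = (x \<in> V \<and> (\<exists>z. z \<in> V \<and> adj x z \<and> reach V adj k z y))"

definition connected_graph :: "'a set \<Rightarrow> ('a \<Rightarrow> 'a \<Rightarrow> bool) \<Rightarrow> bool" where
  "connected_graph V adj = (\<forall>x\<in>V. \<forall>y\<in>V. \<exists>k. reach V adj k x y)"

definition gdist :: "'a set \<Rightarrow> ('a \<Rightarrow> 'a \<Rightarrow> bool) \<Rightarrow> 'a \<Rightarrow> 'a \<Rightarrow> nat" where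
  "gdist V adj x y = (LEAST k. reach V adj k x y)"

definition local_resolving :: "'a set \<Rightarrow> ('a \<Rightarrow> 'a \<Rightarrow> bool) \<Rightarrow> 'a set \<Rightarrow> bool" where
  "local_resolving V adj S = (S \<subseteq> V \<and>
     (\<forall>x\<in>V. \<forall>y\<in>V. adj x y \<longrightarrow> (\<exists>s\<in>S. gdist V adj s x \<noteq> gdist V adj s y)))"

definition local_metric_dim :: "'a set \<Rightarrow> ('a \<Rightarrow> 'a \<Rightarrow> bool) \<Rightarrow> nat" where
  "local_metric_dim V adj = (LEAST k. \<exists>S. finite S \<and> card S = k \<and> local_resolving V adj S)"

text \<open>Cycle C_m on vertices {0..<m}.\<close>
definition cyc_adj :: "nat \<Rightarrow> nat \<Rightarrow> nat \<Rightarrow> bool" where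
  "cyc_adj m v w = (w = (v + 1) mod m \<or> v = (w + 1) mod m)"

text \<open>Lexicographic product of G (vertices {0..<t}, adjacency E) with the family of
cycles C_{n i}: vertex (i,v) stands for (u_i, v).\<close>
definition lex_vertices :: "nat \<Rightarrow> (nat \<Rightarrow> nat) \<Rightarrow> (nat \<times> nat) set" where
  "lex_vertices t n = {(i, v). i < t \<and> v < n i}"

definition lex_adj :: "(nat \<Rightarrow> nat \<Rightarrow> bool) \<Rightarrow> (nat \<Rightarrow> nat) \<Rightarrow> nat \<times> nat \<Rightarrow> nat \<times> nat \<Rightarrow> bool" where
  "lex_adj E n p q = (E (fst p) (fst q) \<or> (fst p = fst q \<and> cyc_adj (n (fst p)) (snd p) (snd q)))"

end

theory Submission
  imports Defs
begin
definition dd :: "nat \<Rightarrow> nat \<Rightarrow> nat \<Rightarrow> nat" where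
  "dd m x v = (if x = v then 0 else if cyc_adj m x v then 1 else 2)"
definition ff :: "nat \<Rightarrow> nat \<Rightarrow> nat set" where
  "ff m x = {x, if x \<ge> 2 then x-2 else x+m-2, if x \<ge> 1 then x-1 else m-1, if Suc x = m then 0 else Suc x}"
lemma suc_mod: "(x::nat) < m \<Longrightarrow> Suc x mod m = (if Suc x = m then 0 else Suc x)"
  by (auto simp: mod_if)
lemma cyc: "m \<ge> 3 \<Longrightarrow> x < m \<Longrightarrow> v < m \<Longrightarrow> cyc_adj m x v \<longleftrightarrow> (v = x+1 \<or> x = v+1 \<or> (x = m-1 \<and> v = 0) \<or> (v = m-1 \<and> x = 0))"
  unfolding cyc_adj_def by (auto simp: suc_mod)
lemma ff_card: "card (ff m x) \<le> 4"
proof -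
  have "card {a,b,c,(d::nat)} \<le> 4" for a b c d
    by (auto simp: card_insert_if)
  then show ?thesis unfolding ff_def by blast
qed
definition sc :: "nat \<Rightarrow> nat \<Rightarrow> nat" where "sc m v = (if Suc v = m then 0 else Suc v)"
definition pr :: "nat \<Rightarrow> nat \<Rightarrow> nat" where "pr m v = (if v = 0 then m - 1 else v - 1)"

lemma sc_lt: "x < m \<Longrightarrow> sc m x < m" unfolding sc_def by auto
lemma pr_lt: "x < m \<Longrightarrow> pr m x < m" unfolding pr_def by auto
lemma sc_pr: "x < m \<Longrightarrow> sc m (pr m x) = x" unfolding sc_def pr_def by auto
lemma pr_sc: "x < m \<Longrightarrow> pr m (sc m x) = x" unfolding sc_def pr_def by auto
lemma cyc_sc: "x < m \<Longrightarrow> v < m \<Longrightarrow> cyc_adj m x v \<longleftrightarrow> v = sc m x \<or> x = sc m v"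
  unfolding cyc_adj_def sc_def by (simp add: suc_mod)
lemma ff_sc: "m \<ge> 3 \<Longrightarrow> x < m \<Longrightarrow> ff m x = {x, pr m (pr m x), pr m x, sc m x}"
  unfolding ff_def sc_def pr_def by auto
lemma dist5: "m \<ge> 7 \<Longrightarrow> x < m \<Longrightarrow>
  pr m (pr m x) \<noteq> pr m x \<and> pr m (pr m x) \<noteq> x \<and> pr m (pr m x) \<noteq> sc m x \<and> pr m (pr m x) \<noteq> sc m (sc m x) \<and>
  pr m x \<noteq> x \<and> pr m x \<noteq> sc m x \<and> pr m x \<noteq> sc m (sc m x) \<and>
  x \<noteq> sc m x \<and> x \<noteq> sc m (sc m x) \<and> sc m x \<noteq> sc m (sc m x)"
  unfolding sc_def pr_def by auto

lemma dist3: "m \<ge> 7 \<Longrightarrow> x < m \<Longrightarrow> x \<noteq> sc m (sc m (sc m x))"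
  unfolding sc_def by auto

lemma key: "m \<ge> 7 \<Longrightarrow> x < m \<Longrightarrow> v < m \<Longrightarrow>
   (dd m x v \<noteq> dd m x (Suc v mod m)) \<longleftrightarrow> v \<in> ff m x"
proof -
  assume a: "m \<ge> 7" "x < m" "v < m"
  have w: "Suc v mod m = sc m v" using a by (simp add: suc_mod sc_def)
  have wl: "sc m v < m" using a by (simp add: sc_lt)
  have inj: "\<And>p q. p < m \<Longrightarrow> q < m \<Longrightarrow> sc m p = sc m q \<Longrightarrow> p = q" by (metis pr_sc)
  have d: "pr m (pr m x) \<noteq> pr m x" "pr m (pr m x) \<noteq> x" "pr m (pr m x) \<noteq> sc m x" "pr m (pr m x) \<noteq> sc m (sc m x)"
    "pr m x \<noteq> x" "pr m x \<noteq> sc m x" "pr m x \<noteq> sc m (sc m x)"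
    "x \<noteq> sc m x" "x \<noteq> sc m (sc m x)" "sc m x \<noteq> sc m (sc m x)" using dist5[OF a(1,2)] by auto
  have l: "pr m x < m" "pr m (pr m x) < m" "sc m x < m" using a by (auto simp: pr_lt sc_lt)
  have e1: "sc m (pr m x) = x" "sc m (pr m (pr m x)) = pr m x" using a l by (auto simp: sc_pr)
  have ffx: "ff m x = {x, pr m (pr m x), pr m x, sc m x}" using ff_sc[of m x] a by simp
  have ddv: "dd m x v = (if x = v then 0 else if v = sc m x \<or> x = sc m v then 1 else 2)"
    unfolding dd_def cyc_sc[OF a(2) a(3)] by simp
  have ddw: "dd m x (sc m v) = (if x = sc m v then 0 else if sc m v = sc m x \<or> x = sc m (sc m v) then 1 else 2)"
    unfolding dd_def cyc_sc[OF a(2) wl] by simp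
  have G: "((if x = v then 0 else if v = sc m x \<or> x = sc m v then 1 else 2) \<noteq>
     (if x = sc m v then 0 else if sc m v = sc m x \<or> x = sc m (sc m v) then 1 else (2::nat)))
     \<longleftrightarrow> v \<in> {x, pr m (pr m x), pr m x, sc m x}"
  proof (cases "v = pr m (pr m x)")
    case True then show ?thesis using d e1 by auto
  next
    case c1: False
    show ?thesis
    proof (cases "v = pr m x")
      case True then show ?thesis using d e1 by auto
    next
      case c2: False
      show ?thesis
      proof (cases "v = x")
        case True then show ?thesis using d e1 by auto
      next
        case c3: False
        show ?thesis
        proof (cases "v = sc m x")
          case True then show ?thesis using d e1 dist3[OF a(1,2)] by auto
        next
          case c4: False
          have "sc m v \<noteq> x" using c2 e1 inj[of v "pr m x"] a l by auto
          moreover have "sc m v \<noteq> sc m x" using c3 inj[of v x] a by auto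
          moreover have "sc m v \<noteq> pr m x" using c1 e1 inj[of v "pr m (pr m x)"] a l by auto
          moreover have "x \<noteq> sc m (sc m v)" using c1 pr_sc[of v m] pr_sc[of "sc m v" m] a wl by metis
          ultimately show ?thesis using c1 c2 c3 c4 by simp
        qed
      qed
    qed
  qed
  then show ?thesis unfolding w ffx ddv ddw .
qed

lemma cross: "m \<ge> 7 \<Longrightarrow> v < m \<Longrightarrow> dd m 0 v \<noteq> 1 \<or> dd m 4 v \<noteq> 1"
proof -
  assume a: "m \<ge> 7" "v < m"
  have c: "m \<ge> 3" "0 < m" "4 < m" using a by auto
  show ?thesis unfolding dd_def cyc[OF c(1) c(2) a(2)] cyc[OF c(1) c(3) a(2)] using a by auto
qed

lemma cover: "m \<ge> 7 \<Longrightarrow> v < m \<Longrightarrow> \<exists>x<m. 4 dvd x \<and> v \<in> ff m x"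
proof -
  assume a: "m \<ge> 7" "v < m"
  define s where "s = 4 * ((v+2) div 4)"
  have s1: "s \<le> v + 2" "v + 2 < s + 4" unfolding s_def by auto
  show ?thesis
  proof (cases "s < m")
    case True
    have "v = s - 2 \<and> s \<ge> 2 \<or> v = s - 1 \<and> s \<ge> 1 \<or> v = s \<or> v = Suc s" using s1 by linarith
    then have "v \<in> ff m s" unfolding ff_def using a by auto
    then show ?thesis using True unfolding s_def by auto
  next
    case False
    have "v = m - 2 \<or> v = m - 1" using s1 False a by linarith
    then have "v \<in> ff m 0" unfolding ff_def using a by auto
    then show ?thesis using a by (intro exI[where x=0]) auto
  qed
qed

lemma ceil4: "nat \<lceil>real m / 4\<rceil> = (m + 3) div 4"
proof -
  define q where "q = (m + 3) div 4"
  have h1: "4 * q \<le> m + 3" "m + 3 < 4 * q + 4" unfolding q_def by auto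
  have h2: "m \<le> 4 * q" using h1 by linarith
  have "real (4*q) \<le> real (m+3)" "real m \<le> real (4*q)" using h1 h2 by (simp only: of_nat_le_iff)+
  then have "real_of_int (int q) - 1 < real m / 4" "real m / 4 \<le> real_of_int (int q)" by auto
  then have "\<lceil>real m / 4\<rceil> = int q" by (rule ceiling_unique)
  then show ?thesis unfolding q_def by simp
qed

locale LP =
  fixes t :: nat and E :: "nat \<Rightarrow> nat \<Rightarrow> bool" and n :: "nat \<Rightarrow> nat"
  assumes t2: "t \<ge> 2"
    and Ebd: "\<forall>i j. E i j \<longrightarrow> i < t \<and> j < t"
    and Esym: "\<forall>i j. E i j \<longrightarrow> E j i"
    and Eirr: "\<forall>i. \<not> E i i"
    and conn: "connected_graph {0..<t} E"
    and n7: "\<forall>i<t. n i \<ge> 7"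
begin

abbreviation "V \<equiv> lex_vertices t n"
abbreviation "A \<equiv> lex_adj E n"

lemma memV[simp]: "(i,v) \<in> V \<longleftrightarrow> i < t \<and> v < n i"
  by (simp add: lex_vertices_def)

lemma A_iff[simp]: "A (i,v) (j,w) \<longleftrightarrow> E i j \<or> (i = j \<and> cyc_adj (n i) v w)"
  by (simp add: lex_adj_def)

lemma reach_V: "reach V A k x y \<Longrightarrow> x \<in> V \<and> y \<in> V"
  by (induction k arbitrary: x) auto

lemma reach_app: "reach V A a x y \<Longrightarrow> reach V A b y z \<Longrightarrow> reach V A (a+b) x z"
  by (induction a arbitrary: x) auto

lemma gdist_eqI: "reach V A m x y \<Longrightarrow> (\<And>k. k < m \<Longrightarrow> \<not> reach V A k x y) \<Longrightarrow> gdist V A x y = m"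
  unfolding gdist_def by (rule Least_equality) (auto simp: not_less[symmetric])

lemma nbr: "i < t \<Longrightarrow> \<exists>k. E i k"
proof -
  assume i: "i < t"
  have "\<exists>j<t. j \<noteq> i" using t2 i by (intro exI[of _ "if i = 0 then 1 else 0"]) auto
  then obtain j where j: "j < t" "j \<noteq> i" by blast
  have ij: "i \<in> {0..<t}" "j \<in> {0..<t}" using i j by auto
  obtain m where r: "reach {0..<t} E m i j" using conn ij unfolding connected_graph_def by blast
  show ?thesis
  proof (cases m)
    case 0 then show ?thesis using r j by simp
  next
    case (Suc m') then show ?thesis using r by auto
  qed
qed

lemma same_dist: "i < t \<Longrightarrow> x < n i \<Longrightarrow> v < n i \<Longrightarrow> gdist V A (i,x) (i,v) = dd (n i) x v"
proof -
  assume a: "i < t" "x < n i" "v < n i"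
  have n7i: "n i \<ge> 7" using n7 a by auto
  show ?thesis
  proof (cases "x = v")
    case True
    then show ?thesis unfolding dd_def using a by (intro gdist_eqI) auto
  next
    case ne: False
    show ?thesis
    proof (cases "cyc_adj (n i) x v")
      case True
      then show ?thesis unfolding dd_def using a ne by (intro gdist_eqI) (auto simp: less_Suc_eq)
    next
      case False
      obtain k where k: "E i k" using nbr a by auto
      have kt: "k < t" using k Ebd by auto
      have "n k \<ge> 7" using n7 kt by auto
      then have "(k,0) \<in> V" using kt by simp
      have ki: "E k i" using k Esym by auto
      have "reach V A 2 (i,x) (i,v)"
        using a \<open>(k,0) \<in> V\<close> k ki by (simp add: numeral_2_eq_2) blast
      moreover have "\<not> reach V A k' (i,x) (i,v)" if "k' < 2" for k'
        using that ne False Eirr by (auto simp: numeral_2_eq_2 less_Suc_eq)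
      ultimately show ?thesis unfolding dd_def using ne False by (intro gdist_eqI) auto
    qed
  qed
qed

lemma cross_dist: "E i j \<Longrightarrow> x < n i \<Longrightarrow> w < n j \<Longrightarrow> gdist V A (i,x) (j,w) = 1"
proof -
  assume a: "E i j" "x < n i" "w < n j"
  have "i < t" "j < t" "i \<noteq> j" using a Ebd Eirr by auto
  then show ?thesis using a by (intro gdist_eqI) auto
qed

lemma step1: "x \<in> V \<Longrightarrow> y \<in> V \<Longrightarrow> A x y \<Longrightarrow> reach V A 1 x y"
  by (simp only: One_nat_def reach.simps) blast

lemma walkE: "E k i \<Longrightarrow> w < n k \<Longrightarrow> v < n i \<Longrightarrow> m \<ge> 1 \<Longrightarrow> reach V A m (k,w) (i,v)"
proof (induction m rule: less_induct)
  case (less m)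
  have kt: "k < t" "i < t" using less.prems Ebd by auto
  have ik: "E i k" using less.prems Esym by auto
  have ki: "E k i" using less.prems by simp
  have n7i: "n i \<ge> 7" using n7 kt by auto
  have kV: "(k,w) \<in> V" and iV: "(i,v) \<in> V" using less.prems kt by simp_all
  have s1: "reach V A 1 (k,w) (i,v)" by (rule step1[OF kV iV]) (simp add: ki)
  show ?case
  proof (cases "m \<le> 2")
    case True
    then consider "m = 1" | "m = 2" using less.prems by linarith
    then show ?thesis
    proof cases
      case 1 then show ?thesis using s1 by simp
    next
      case 2
      have z: "(i, Suc v mod n i) \<in> V" using kt n7i by simp
      have "cyc_adj (n i) (Suc v mod n i) v" unfolding cyc_adj_def by simp
      then have r2: "reach V A 1 (i, Suc v mod n i) (i,v)" by (intro step1[OF z iV]) simp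
      have r1: "reach V A 1 (k,w) (i, Suc v mod n i)" by (rule step1[OF kV z]) (simp add: ki)
      have r3: "reach V A (1+1) (k,w) (i,v)" by (rule reach_app[OF r1 r2])
      have e: "1 + 1 = m" using 2 by simp
      show ?thesis using r3 unfolding e .
    qed
  next
    case False
    have r1: "reach V A (m-2) (k,w) (i,v)"
      by (rule less.IH) (use False less.prems in auto)
    have a1: "reach V A 1 (i,v) (k,w)" by (rule step1[OF iV kV]) (simp add: ik)
    have r2: "reach V A (1+1) (i,v) (i,v)" by (rule reach_app[OF a1 s1])
    have r3: "reach V A (m-2+(1+1)) (k,w) (i,v)" by (rule reach_app[OF r1 r2])
    have e: "m-2+(1+1) = m" using False by simp
    show ?thesis using r3 unfolding e .
  qed
qed

lemma other_reach: "fst s \<noteq> i \<Longrightarrow> reach V A m s (i,v) \<Longrightarrow> v' < n i \<Longrightarrow> reach V A m s (i,v')"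
proof (induction m arbitrary: s)
  case 0 then show ?case by auto
next
  case (Suc m)
  obtain k w where s: "s = (k,w)" by (cases s)
  from Suc.prems obtain z where z: "z \<in> V" "A s z" "reach V A m z (i,v)" and sV: "s \<in> V" by auto
  obtain j u where zz: "z = (j,u)" by (cases z)
  show ?case
  proof (cases "j = i")
    case False
    then have r: "reach V A m (j,u) (i,v')" using Suc.IH[of z] z zz Suc.prems by auto
    have "j < t" "u < n j" "A s (j,u)" using z zz by auto
    then show ?thesis using r sV by auto
  next
    case True
    then have "E k i" using z zz s Suc.prems by auto
    then show ?thesis using walkE[of k i w v' "Suc m"] sV s Suc.prems by auto
  qed
qed

lemma other_dist: "fst s \<noteq> i \<Longrightarrow> v < n i \<Longrightarrow> v' < n i \<Longrightarrow> gdist V A s (i,v) = gdist V A s (i,v')"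
proof -
  assume a: "fst s \<noteq> i" "v < n i" "v' < n i"
  have "(\<lambda>k. reach V A k s (i,v)) = (\<lambda>k. reach V A k s (i,v'))"
    using other_reach[OF a(1) _ a(3)] other_reach[OF a(1) _ a(2)] by blast
  then show ?thesis unfolding gdist_def by simp
qed


definition S0 :: "(nat \<times> nat) set" where
  "S0 = {(i,v). i < t \<and> v < n i \<and> 4 dvd v}"

lemma S0_res: "local_resolving V A S0"
  unfolding local_resolving_def
proof (intro conjI ballI impI)
  show "S0 \<subseteq> V" unfolding S0_def lex_vertices_def by auto
next
  fix x y assume xV: "x \<in> V" and yV: "y \<in> V" and xy: "A x y"
  obtain i v where x: "x = (i,v)" by (cases x)
  obtain j w where y: "y = (j,w)" by (cases y)
  have iv: "i < t" "v < n i" "j < t" "w < n j" using xV yV x y by auto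
  have n7i: "n i \<ge> 7" using n7 iv by auto
  from xy x y have "E i j \<or> (i = j \<and> cyc_adj (n i) v w)" by simp
  then show "\<exists>s\<in>S0. gdist V A s x \<noteq> gdist V A s y"
  proof
    assume Eij: "E i j"
    have gy: "gdist V A (i,c) y = 1" if "c < n i" for c using cross_dist[OF Eij that iv(4)] y by simp
    have gx: "gdist V A (i,c) x = dd (n i) c v" if "c < n i" for c using same_dist[OF iv(1) that iv(2)] x by simp
    have in0: "(i,0) \<in> S0" "(i,4) \<in> S0" using iv n7i unfolding S0_def by auto
    have "0 < n i" "4 < n i" using n7i by auto
    then show ?thesis using cross[OF n7i iv(2)] gx gy in0 by metis
  next
    assume h: "i = j \<and> cyc_adj (n i) v w"
    then have ij: "j = i" by simp
    from h have "cyc_adj (n i) v w" by (rule conjunct2)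
    then have "w = Suc v mod n i \<or> v = Suc w mod n i" unfolding cyc_adj_def by simp
    then show ?thesis
    proof
      assume wv: "w = Suc v mod n i"
      obtain c where c: "c < n i" "4 dvd c" "v \<in> ff (n i) c" using cover[OF n7i iv(2)] by blast
      have "dd (n i) c v \<noteq> dd (n i) c w" using key[OF n7i c(1) iv(2)] c wv by simp
      moreover have "(i,c) \<in> S0" using c iv unfolding S0_def by auto
      ultimately show ?thesis using same_dist[OF iv(1) c(1) iv(2)] same_dist[OF iv(1) c(1)] iv x y ij by metis
    next
      assume wv: "v = Suc w mod n i"
      have w': "w < n i" using iv ij by simp
      obtain c where c: "c < n i" "4 dvd c" "w \<in> ff (n i) c" using cover[OF n7i w'] by blast
      have "dd (n i) c w \<noteq> dd (n i) c v" using key[OF n7i c(1) w'] c wv by simp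
      moreover have "(i,c) \<in> S0" using c iv unfolding S0_def by auto
      ultimately show ?thesis using same_dist[OF iv(1) c(1) w'] same_dist[OF iv(1) c(1)] iv x y ij by metis
    qed
  qed
qed

lemma card_blocks:
  assumes "finite S" "S \<subseteq> V"
  shows "card S = (\<Sum>i<t. card {v. (i,v) \<in> S})"
proof -
  have eq: "S = (\<Union>i\<in>{..<t}. Pair i ` {v. (i,v) \<in> S})"
    using assms(2) by (auto simp: lex_vertices_def)
  have fin: "finite {v. (i,v) \<in> S}" for i
    using finite_vimageI[OF assms(1), of "Pair i"] by (simp add: inj_on_def vimage_def)
  have "card S = (\<Sum>i<t. card (Pair i ` {v. (i,v) \<in> S}))"
    by (subst eq, rule card_UN_disjoint) (auto simp: fin)
  also have "\<dots> = (\<Sum>i<t. card {v. (i,v) \<in> S})"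
    by (rule sum.cong) (auto simp: card_image inj_on_def)
  finally show ?thesis .
qed

lemma S0_card: "card S0 = (\<Sum>i<t. (n i + 3) div 4)"
proof -
  have fin: "finite S0" unfolding S0_def
    by (rule finite_subset[of _ "Sigma {..<t} (\<lambda>i. {..<n i})"]) auto
  have sub: "S0 \<subseteq> V" unfolding S0_def lex_vertices_def by auto
  have "card {v. (i,v) \<in> S0} = (n i + 3) div 4" if "i < t" for i
  proof -
    have "{v. (i,v) \<in> S0} = (\<lambda>j. 4*j) ` {..<(n i + 3) div 4}"
      using that unfolding S0_def by (auto elim!: dvdE simp: image_iff)
    then show ?thesis by (simp add: card_image inj_on_def)
  qed
  then show ?thesis using card_blocks[OF fin sub] by simp
qed

lemma lower:
  assumes "finite S" "local_resolving V A S"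
  shows "(\<Sum>i<t. (n i + 3) div 4) \<le> card S"
proof -
  have SV: "S \<subseteq> V" using assms(2) unfolding local_resolving_def by auto
  have blk: "(n i + 3) div 4 \<le> card {v. (i,v) \<in> S}" if i: "i < t" for i
  proof -
    let ?Si = "{v. (i,v) \<in> S}"
    have fin: "finite ?Si"
      using finite_vimageI[OF assms(1), of "Pair i"] by (simp add: inj_on_def vimage_def)
    have n7i: "n i \<ge> 7" using n7 i by auto
    have cov: "{..<n i} \<subseteq> (\<Union>c\<in>?Si. ff (n i) c)"
    proof
      fix v assume "v \<in> {..<n i}"
      then have v: "v < n i" by simp
      have sv: "Suc v mod n i < n i" using n7i by simp
      have "A (i,v) (i, Suc v mod n i)" by (simp add: cyc_adj_def)
      moreover have "(i,v) \<in> V" "(i, Suc v mod n i) \<in> V" using i v sv by auto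
      ultimately obtain s where s: "s \<in> S" "gdist V A s (i,v) \<noteq> gdist V A s (i, Suc v mod n i)"
        using assms(2) unfolding local_resolving_def by blast
      obtain k c where kc: "s = (k,c)" by (cases s)
      have "k = i" using other_dist[of s i v "Suc v mod n i"] s kc v sv by (metis fst_conv)
      then have c: "c \<in> ?Si" "c < n i" using s kc SV by auto
      have "dd (n i) c v \<noteq> dd (n i) c (Suc v mod n i)"
        using s kc \<open>k = i\<close> same_dist[OF i c(2) v] same_dist[OF i c(2) sv] by simp
      then have "v \<in> ff (n i) c" using key[OF n7i c(2) v] by simp
      then show "v \<in> (\<Union>c\<in>?Si. ff (n i) c)" using c by blast
    qed
    have "n i = card {..<n i}" by simp
    also have "\<dots> \<le> card (\<Union>c\<in>?Si. ff (n i) c)"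
      by (rule card_mono[OF _ cov]) (auto simp: fin ff_def)
    also have "\<dots> \<le> (\<Sum>c\<in>?Si. card (ff (n i) c))" by (rule card_UN_le[OF fin])
    also have "\<dots> \<le> (\<Sum>c\<in>?Si. 4)" by (rule sum_mono) (rule ff_card)
    also have "\<dots> = 4 * card ?Si" by simp
    finally show ?thesis by linarith
  qed
  have "(\<Sum>i<t. (n i + 3) div 4) \<le> (\<Sum>i<t. card {v. (i,v) \<in> S})"
    by (rule sum_mono) (simp add: blk)
  also have "\<dots> = card S" using card_blocks[OF assms(1) SV] by simp
  finally show ?thesis .
qed

lemma main: "local_metric_dim V A = (\<Sum>i<t. (n i + 3) div 4)"
  unfolding local_metric_dim_def
proof (rule Least_equality)
  have fin: "finite S0" unfolding S0_def
    by (rule finite_subset[of _ "Sigma {..<t} (\<lambda>i. {..<n i})"]) auto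
  show "\<exists>S. finite S \<and> card S = (\<Sum>i<t. (n i + 3) div 4) \<and> local_resolving V A S"
    using fin S0_card S0_res by blast
next
  fix k assume "\<exists>S. finite S \<and> card S = k \<and> local_resolving V A S"
  then show "(\<Sum>i<t. (n i + 3) div 4) \<le> k" using lower by blast
qed

end

theorem proposition3:
  fixes t :: nat and E :: "nat \<Rightarrow> nat \<Rightarrow> bool" and n :: "nat \<Rightarrow> nat"
  assumes "t \<ge> 2"
    and "\<forall>i j. E i j \<longrightarrow> i < t \<and> j < t"
    and "\<forall>i j. E i j \<longrightarrow> E j i"
    and "\<forall>i. \<not> E i i"
    and "connected_graph {0..<t} E"
    and "\<forall>i<t. n i \<ge> 7"
  shows "local_metric_dim (lex_vertices t n) (lex_adj E n) = (\<Sum>i<t. nat \<lceil>real (n i) / 4\<rceil>)"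
proof -
  interpret LP t E n using assms by (unfold_locales) auto
  show ?thesis by (simp only: main ceil4)
qed

end
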